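(* Consider a hyperfractal with $n$ nodes and $d_F>2$. Let $\epsilon>0$ and $H(n)=\left\lceil \frac{\log(n^{1-\epsilon}p/2)}{\log(2/q)}\right\rceil$, and let $n_c$ denote the number of mobile nodes on a street of level $H(n)$. Then the probability that this street is empty, i.e. $\mathbb{P}(n_c=0)$, is smaller than $e^{-(q/2)n^{\epsilon}}$.
   Context: Hyperfractal model: the map is the unit square $[0,1]^2$. For $l\ge 0$ let $\mathcal{X}_l=\{(b2^{-(l+1)},y): b=1,3,\dots,2^{l+1}-1,\ y\in[0,1]\}\cup\{(x,b2^{-(l+1)}): b=1,3,\dots,2^{l+1}-1,\ x\in[0,1]\}$; each such segment is a street of level $l$. Fix $p\in(0,1)$, $q=1-p$. The $n$ mobile nodes form a Poisson point process on $\bigcup_l\mathcal{X}_l$ with total mean $n$ and one-dimensional intensity $\lambda_l=n(p/2)(q/2)^l$ on $\mathcal{X}_l$. The fractal dimension is $d_F=\log(4/q)/\log 2$. *)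

theory Defs
  imports "HOL-Probability.Probability"
begin

definition hf_q :: "real \<Rightarrow> real" where
  "hf_q p = 1 - p"

definition hf_dim :: "real \<Rightarrow> real" where
  "hf_dim p = ln (4 / hf_q p) / ln 2"

text \<open>One-dimensional intensity of the Poisson point process on a street of level l.\<close>
definition hf_intensity :: "nat \<Rightarrow> real \<Rightarrow> nat \<Rightarrow> real" where
  "hf_intensity n p l = real n * (p / 2) * (hf_q p / 2) ^ l"

definition street_length :: real where
  "street_length = 1"

definition hf_H :: "nat \<Rightarrow> real \<Rightarrow> real \<Rightarrow> int" where
  "hf_H n p \<epsilon> = \<lceil>ln (real n powr (1 - \<epsilon>) * p / 2) / ln (2 / hf_q p)\<rceil>"

end

theory Submission
  imports Defs
begin

theorem lemma5:
  fixes M :: "'a measure" and nc :: "'a \<Rightarrow> nat"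
    and n :: nat and p \<epsilon> :: real
  assumes "prob_space M"
    and "0 < p" "p < 1"
    and "n > 0"
    and "hf_dim p > 2"
    and "\<epsilon> > 0"
    and "hf_H n p \<epsilon> \<ge> 0"
    and "nc \<in> measurable M (count_space UNIV)"
    and "distr M (count_space UNIV) nc =
           measure_pmf (poisson_pmf (hf_intensity n p (nat (hf_H n p \<epsilon>)) * street_length))"
  shows "measure M {\<omega> \<in> space M. nc \<omega> = 0} < exp (- (hf_q p / 2) * real n powr \<epsilon>)"
proof -
  define q where "q = hf_q p"
  have q: "0 < q" "q < 1" using assms(2,3) by (auto simp: q_def hf_q_def)
  define r where "r = 2 / q"
  have r1: "1 < r" using q by (simp add: r_def)
  define A where "A = real n powr (1 - \<epsilon>) * p / 2"
  have A: "A > 0" using assms(2,4) by (simp add: A_def)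
  define x where "x = ln A / ln r"
  define H where "H = hf_H n p \<epsilon>"
  have Hx: "H = \<lceil>x\<rceil>" by (simp add: H_def hf_H_def x_def A_def r_def q_def)
  have Hlt: "real_of_int H < x + 1" using Hx by linarith
  have rx: "r powr x = A"
    using A r1 by (simp add: x_def powr_def)
  have qh: "(q/2) ^ nat H = r powr (- real_of_int H)"
  proof -
    have qr: "q/2 = inverse r" using q by (simp add: r_def)
    have "r powr (- real (nat H)) = inverse (r powr real (nat H))" by (rule powr_minus)
    also have "r powr real (nat H) = r ^ nat H" using r1 by (simp add: powr_realpow)
    finally have "(q/2) ^ nat H = r powr (- real (nat H))"
      unfolding qr by (simp add: power_inverse)
    then show ?thesis using assms(7) H_def by simp
  qed
  have "r powr (- real_of_int H) > r powr (- (x+1))"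
    using r1 Hlt by (intro powr_less_mono) auto
  also have "r powr (- (x+1)) = 1 / (A * r)"
  proof -
    have "r powr (- (x+1)) = inverse (r powr (x+1))" by (rule powr_minus)
    also have "r powr (x+1) = A * r" using r1 rx by (simp add: powr_add)
    finally show ?thesis by (simp add: divide_inverse)
  qed
  finally have ineq1: "r powr (- real_of_int H) > 1 / (A * r)" .
  define L where "L = hf_intensity n p (nat H) * street_length"
  have L: "L = real n * (p/2) * r powr (- real_of_int H)"
    by (simp add: L_def hf_intensity_def street_length_def qh[symmetric] q_def)
  have np: "real n * (p/2) > 0" using assms(2,4) by simp
  have "L > real n * (p/2) * (1 / (A * r))"
    unfolding L using mult_strict_left_mono[OF ineq1 np] .
  also have "real n * (p/2) * (1 / (A * r)) = (q/2) * real n powr \<epsilon>"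
  proof -
    have "real n powr (1 - \<epsilon>) = real n / real n powr \<epsilon>"
      using assms(4) by (simp add: powr_diff)
    then show ?thesis using assms(2,4) q
      by (simp add: A_def r_def field_simps)
  qed
  finally have Lgt: "L > (q/2) * real n powr \<epsilon>" .
  have Lpos: "L > 0" proof -
    have "(q/2) * real n powr \<epsilon> > 0" using q assms(4) by simp
    then show ?thesis using Lgt by linarith
  qed
  have "measure M {\<omega> \<in> space M. nc \<omega> = 0} = measure (distr M (count_space UNIV) nc) {0}"
    using assms(8) by (subst measure_distr) (auto intro: arg_cong[where f="measure M"])
  also have "\<dots> = measure (measure_pmf (poisson_pmf L)) {0}"
    using assms(9) by (simp add: L_def H_def)
  also have "\<dots> = pmf (poisson_pmf L) 0" by (simp add: measure_pmf_single)
  also have "\<dots> = exp (- L)" using Lpos by simp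
  also have "\<dots> < exp (- (q / 2) * real n powr \<epsilon>)" using Lgt by simp
  finally show ?thesis by (simp add: q_def)
qed

end
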